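(* There is $d_0$ such that the following holds for all $d\geq d_0$. Let $G$ be a graph on $n$ vertices with average degree $d$. Then there exists a non-empty bipartite subgraph $G'$ of $G$ with parts $X$ and $Y$ such that $e(G')\geq|X|\cdot\frac{\Delta(G')}{80}$ and $e(G')\geq|Y|\cdot\frac{d}{10\log n}$.
   Context: $e(G')$ is the number of edges and $\Delta(G')$ the maximum degree of $G'$. Logarithms are base $2$. *)

theory Defs
  imports Complex_Main
begin

definition simple_graph :: "'a set \<Rightarrow> 'a set set \<Rightarrow> bool" where
  "simple_graph V E \<longleftrightarrow> finite V \<and> (\<forall>e\<in>E. e \<subseteq> V \<and> card e = 2)"

definition degree :: "'a set set \<Rightarrow> 'a \<Rightarrow> nat" where
  "degree E v = card {e\<in>E. v \<in> e}"

definition max_degree :: "'a set \<Rightarrow> 'a set set \<Rightarrow> nat" where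
  "max_degree V E = Max (degree E ` V)"

definition bipartite_subgraph ::
  "'a set \<Rightarrow> 'a set set \<Rightarrow> 'a set \<Rightarrow> 'a set \<Rightarrow> 'a set set \<Rightarrow> bool" where
  "bipartite_subgraph V E X Y E' \<longleftrightarrow>
     X \<subseteq> V \<and> Y \<subseteq> V \<and> X \<inter> Y = {} \<and> E' \<subseteq> E \<and>
     (\<forall>e\<in>E'. \<exists>x\<in>X. \<exists>y\<in>Y. e = {x, y})"

definition average_degree :: "'a set \<Rightarrow> 'a set set \<Rightarrow> real" where
  "average_degree V E = 2 * real (card E) / real (card V)"

end

theory Submission imports Defs begin

definition adj :: "nat set \<Rightarrow> nat set set \<Rightarrow> (nat \<times> nat) set" where
  "adj V E = {(x,y). x\<in>V \<and> y\<in>V \<and> {x,y}\<in>E}"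

definition cr :: "nat set \<Rightarrow> nat set set \<Rightarrow> nat set \<Rightarrow> (nat \<times> nat) set" where
  "cr V E A = {(x,y). x\<in>A \<and> y\<in>V-A \<and> {x,y}\<in>E}"

definition rowc :: "(nat \<times> nat) set \<Rightarrow> nat \<Rightarrow> nat" where
  "rowc R x = card {y. (x,y)\<in>R}"

definition colc :: "(nat \<times> nat) set \<Rightarrow> nat \<Rightarrow> nat" where
  "colc R y = card {x. (x,y)\<in>R}"

definition FF :: "(nat \<times> nat) set \<Rightarrow> (nat \<times> nat) set" where
  "FF R = {(x,y)\<in>R. colc R y \<le> rowc R x}"

lemma sg_finE: "simple_graph V E \<Longrightarrow> finite E"
  unfolding simple_graph_def by (meson Pow_iff finite_Pow_iff finite_subset subsetI)

lemma adj_card: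
  assumes sg: "simple_graph V E"
  shows "card (adj V E) = 2 * card E"
proof -
  have eq: "adj V E = (\<Union>e\<in>E. {(x,y). {x,y} = e})"
    using sg unfolding adj_def simple_graph_def by auto
  have two: "card {(x,y). {x,y} = e} = 2" if "e \<in> E" for e
  proof -
    from that sg have "card e = 2" unfolding simple_graph_def by auto
    then obtain a b where e: "e = {a,b}" "a \<noteq> b" by (meson card_2_iff)
    have "{(x,y). {x,y} = e} = {(a,b),(b,a)}" using e by (auto simp: doubleton_eq_iff)
    then show ?thesis using e by simp
  qed
  have fin2: "finite {(x,y). {x,y} = e}" if "e \<in> E" for e
    using two[OF that] card_gt_0_iff by fastforce
  have "card (adj V E) = (\<Sum>e\<in>E. card {(x,y). {x,y} = e})"
    unfolding eq by (rule card_UN_disjoint) (use sg_finE[OF sg] fin2 in auto)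
  also have "\<dots> = 2 * card E" using two by simp
  finally show ?thesis .
qed

lemma adj_le:
  assumes sg: "simple_graph V E"
  shows "card (adj V E) \<le> card V ^ 2"
proof -
  have "adj V E \<subseteq> V \<times> V" unfolding adj_def by auto
  moreover have "finite V" using sg simple_graph_def by auto
  ultimately have "card (adj V E) \<le> card (V \<times> V)" by (intro card_mono) auto
  then show ?thesis by (simp add: card_cartesian_product power2_eq_square)
qed

lemma adj_ne: "simple_graph V E \<Longrightarrow> (x,y) \<in> adj V E \<Longrightarrow> x \<noteq> y"
  unfolding adj_def simple_graph_def by auto

lemma count_sets:
  assumes "finite V" "x \<in> V" "y \<in> V" "x \<noteq> y"
  shows "card {A \<in> Pow V. x \<in> A \<and> y \<notin> A} = 2 ^ (card V - 2)"
proof -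
  have "bij_betw (\<lambda>B. insert x B) (Pow (V - {x,y})) {A \<in> Pow V. x \<in> A \<and> y \<notin> A}"
    unfolding bij_betw_def
  proof
    show "inj_on (insert x) (Pow (V - {x, y}))" unfolding inj_on_def by blast
    show "insert x ` Pow (V - {x, y}) = {A \<in> Pow V. x \<in> A \<and> y \<notin> A}"
    proof
      show "insert x ` Pow (V - {x, y}) \<subseteq> {A \<in> Pow V. x \<in> A \<and> y \<notin> A}" using assms by auto
      show "{A \<in> Pow V. x \<in> A \<and> y \<notin> A} \<subseteq> insert x ` Pow (V - {x, y})"
      proof
        fix A assume A: "A \<in> {A \<in> Pow V. x \<in> A \<and> y \<notin> A}"
        then have "A = insert x (A - {x})" "A - {x} \<in> Pow (V - {x,y})" by auto
        then show "A \<in> insert x ` Pow (V - {x, y})" by blast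
      qed
    qed
  qed
  then have "card {A \<in> Pow V. x \<in> A \<and> y \<notin> A} = card (Pow (V - {x,y}))"
    by (simp add: bij_betw_same_card)
  also have "\<dots> = 2 ^ card (V - {x,y})" using assms by (simp add: card_Pow)
  also have "card (V - {x,y}) = card V - 2" using assms by (simp add: card_Diff_subset)
  finally show ?thesis .
qed

lemma cut:
  assumes sg: "simple_graph V E"
  shows "\<exists>A\<subseteq>V. card (adj V E) \<le> 4 * card (cr V E A)"
proof (cases "adj V E = {}")
  case True then show ?thesis by auto
next
  case False
  have finV: "finite V" using sg simple_graph_def by auto
  have "adj V E \<subseteq> V \<times> V" unfolding adj_def by auto
  then have finadj: "finite (adj V E)" using finV finite_subset by blast
  from False obtain x y where xy: "(x,y) \<in> adj V E" by auto
  have "x \<in> V" "y \<in> V" using xy unfolding adj_def by auto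
  have "x \<noteq> y" using adj_ne[OF sg xy] .
  then have n2: "card V \<ge> 2"
  proof -
    have "card {x,y} \<le> card V" using \<open>x \<in> V\<close> \<open>y \<in> V\<close> finV by (intro card_mono) auto
    then show ?thesis using \<open>x \<noteq> y\<close> by simp
  qed
  have crc: "card (cr V E A) = (\<Sum>p\<in>adj V E. if fst p \<in> A \<and> snd p \<notin> A then 1 else 0)"
    if "A \<subseteq> V" for A
  proof -
    have "cr V E A = {p \<in> adj V E. fst p \<in> A \<and> snd p \<notin> A}"
      using that unfolding cr_def adj_def by auto
    then show ?thesis using finadj by (simp add: sum.inter_filter[symmetric])
  qed
  have "(\<Sum>A\<in>Pow V. card (cr V E A)) =
        (\<Sum>A\<in>Pow V. \<Sum>p\<in>adj V E. if fst p \<in> A \<and> snd p \<notin> A then 1 else 0)"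
    using crc by (intro sum.cong) auto
  also have "\<dots> = (\<Sum>p\<in>adj V E. \<Sum>A\<in>Pow V. if fst p \<in> A \<and> snd p \<notin> A then 1 else 0)"
    by (rule sum.swap)
  also have "\<dots> = (\<Sum>p\<in>adj V E. card {A \<in> Pow V. fst p \<in> A \<and> snd p \<notin> A})"
    using finV by (intro sum.cong) (simp_all add: sum.inter_filter[symmetric])
  also have "\<dots> = (\<Sum>p\<in>adj V E. 2 ^ (card V - 2))"
  proof (intro sum.cong refl)
    fix p assume p: "p \<in> adj V E"
    then show "card {A \<in> Pow V. fst p \<in> A \<and> snd p \<notin> A} = 2 ^ (card V - 2)"
      using adj_ne[OF sg, of "fst p" "snd p"] count_sets[OF finV] unfolding adj_def by auto
  qed
  finally have S: "(\<Sum>A\<in>Pow V. card (cr V E A)) = card (adj V E) * 2 ^ (card V - 2)" by simp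
  show ?thesis
  proof (rule ccontr)
    assume "\<not> ?thesis"
    then have lt: "\<And>A. A \<in> Pow V \<Longrightarrow> 4 * card (cr V E A) < card (adj V E)" by auto
    have "(\<Sum>A\<in>Pow V. 4 * card (cr V E A)) < (\<Sum>A\<in>Pow V. card (adj V E))"
      using finV lt by (intro sum_strict_mono) auto
    also have "\<dots> = card (adj V E) * 2 ^ card V" using finV by (simp add: card_Pow)
    finally have "4 * (card (adj V E) * 2 ^ (card V - 2)) < card (adj V E) * 2 ^ card V"
      by (simp only: S sum_distrib_left[symmetric])
    moreover obtain m where "card V = m + 2" using n2 by (metis le_add_diff_inverse2)
    ultimately show False by simp
  qed
qed

lemma FF_sub: "FF R \<subseteq> R" unfolding FF_def by auto

lemma FF_split:
  assumes "finite R"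
  shows "card R \<le> card (FF R) + card (FF ((\<lambda>(x,y). (y,x)) ` R))"
proof -
  let ?s = "\<lambda>(x::nat,y::nat). (y,x)"
  have "R \<subseteq> FF R \<union> ?s ` FF (?s ` R)"
  proof
    fix p assume p: "p \<in> R"
    obtain x y where pxy: "p = (x,y)" by fastforce
    show "p \<in> FF R \<union> ?s ` FF (?s ` R)"
    proof (cases "colc R y \<le> rowc R x")
      case True then show ?thesis using p pxy unfolding FF_def by auto
    next
      case False
      have e1: "{y'. (y',x) \<in> ?s ` R} = {y'. (x,y') \<in> R}" by auto
      have e2: "{x'. (y,x') \<in> ?s ` R} = {x'. (x',y) \<in> R}" by auto
      have "colc (?s ` R) x \<le> rowc (?s ` R) y" using False unfolding colc_def rowc_def e1 e2
        by auto
      then have "(y,x) \<in> FF (?s ` R)" using p pxy unfolding FF_def by force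
      then show ?thesis using pxy by force
    qed
  qed
  then have "card R \<le> card (FF R \<union> ?s ` FF (?s ` R))"
    by (rule card_mono[rotated]) (use assms finite_subset[OF FF_sub] in auto)
  also have "\<dots> \<le> card (FF R) + card (?s ` FF (?s ` R))" by (rule card_Un_le)
  also have "card (?s ` FF (?s ` R)) \<le> card (FF (?s ` R))" by (rule card_image_le) (use assms finite_subset[OF FF_sub] in auto)
  finally show ?thesis by simp
qed


lemma fin_row: "finite R \<Longrightarrow> finite {y. (x,y) \<in> R}"
  by (rule finite_subset[of _ "snd ` R"]) force+

lemma fin_col: "finite R \<Longrightarrow> finite {x. (x,y) \<in> R}"
  by (rule finite_subset[of _ "fst ` R"]) force+

lemma card_rel_sum:
  assumes "finite P" "finite R" "\<And>x y. (x,y)\<in>R \<Longrightarrow> x \<in> P"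
  shows "card R = (\<Sum>x\<in>P. rowc R x)"
proof -
  have eq: "R = (\<Union>x\<in>P. Pair x ` {y. (x,y)\<in>R})" using assms(3) by auto
  have "card R = (\<Sum>x\<in>P. card (Pair x ` {y. (x,y)\<in>R}))"
    by (subst eq, rule card_UN_disjoint) (use assms finite_imageI[OF fin_row[OF assms(2)]] in auto)
  also have "\<dots> = (\<Sum>x\<in>P. rowc R x)"
    unfolding rowc_def by (intro sum.cong refl card_image) (auto simp: inj_on_def)
  finally show ?thesis .
qed

lemma ex_max_nat: "\<exists>k\<le>K. \<forall>j\<le>K. (g::nat\<Rightarrow>nat) j \<le> g k"
proof (induction K)
  case 0 then show ?case by auto
next
  case (Suc K)
  then obtain k where k: "k \<le> K" "\<forall>j\<le>K. g j \<le> g k" by auto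
  show ?case
  proof (cases "g k \<le> g (Suc K)")
    case True
    then show ?thesis using k by (metis le_Suc_eq order_refl order_trans)
  next
    case False
    then show ?thesis using k by (metis le_Suc_eq nat_le_linear order_trans)
  qed
qed

lemma main:
  fixes V :: "nat set" and E :: "nat set set" and R :: "(nat \<times> nat) set" and P :: "nat set"
  assumes sg: "simple_graph V E" and n4: "4 \<le> card V"
    and RP: "\<And>x y. (x,y) \<in> R \<Longrightarrow> x \<in> P \<and> y \<in> V \<and> y \<notin> P \<and> {x,y} \<in> E"
    and PV: "P \<subseteq> V"
    and hF: "card R \<le> 2 * card (FF R)" and hR: "card E \<le> 2 * card R" and Ene: "E \<noteq> {}"
  shows "\<exists>X Y E'. bipartite_subgraph V E X Y E' \<and> E' \<noteq> {} \<and>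
       real (card E') \<ge> real (card X) * real (max_degree (X \<union> Y) E') / 80 \<and>
       real (card E') \<ge> real (card Y) * (2 * real (card E) / real (card V)) / (10 * log 2 (real (card V)))"
proof -
  define F where "F = FF R"
  define h where "h x = rowc R x" for x
  define f where "f x = rowc F x" for x
  have finV: "finite V" using sg simple_graph_def by auto
  have finP: "finite P" using PV finV finite_subset by auto
  have RVV: "R \<subseteq> V \<times> V" using RP PV by auto
  have finR: "finite R" using RVV finV finite_subset by blast
  have FR: "F \<subseteq> R" unfolding F_def by (rule FF_sub)
  have finF: "finite F" using finR FR finite_subset by blast
  have cR: "card R = (\<Sum>x\<in>P. h x)" unfolding h_def by (rule card_rel_sum) (use finP finR RP in auto)
  have cF: "card F = (\<Sum>x\<in>P. f x)" unfolding f_def by (rule card_rel_sum) (use finP finF FR RP in auto)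
  have fh: "f x \<le> h x" for x unfolding f_def h_def rowc_def
    by (rule card_mono) (use finR FR fin_row in auto)
  have hV: "h x \<le> card V" for x unfolding h_def rowc_def
    by (rule card_mono) (use finV RP in auto)
  define Good where "Good = {x\<in>P. h x \<le> 5 * f x \<and> 1 \<le> f x}"
  have GP: "Good \<subseteq> P" unfolding Good_def by auto
  have bad: "5 * f x \<le> h x" if "x \<in> P - Good" for x
    using that fh[of x] unfolding Good_def by auto
  define S where "S = (\<Sum>x\<in>Good. f x)"
  have split: "card F = (\<Sum>x\<in>P-Good. f x) + S"
    using cF sum.subset_diff[OF GP finP, of f] S_def by simp
  have "5 * (\<Sum>x\<in>P-Good. f x) = (\<Sum>x\<in>P-Good. 5 * f x)" by (simp add: sum_distrib_left)
  also have "\<dots> \<le> (\<Sum>x\<in>P-Good. h x)" using bad by (intro sum_mono) auto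
  also have "\<dots> \<le> (\<Sum>x\<in>P. h x)" by (rule sum_mono2) (use finP in auto)
  finally have "5 * (\<Sum>x\<in>P-Good. f x) \<le> card R" using cR by simp
  then have S3: "3 * card E \<le> 20 * S" using split hF hR unfolding F_def by linarith
  have "card E > 0" using Ene sg_finE[OF sg] by (simp add: card_gt_0_iff)
  then have Spos: "S > 0" using S3 by linarith
  define cls where "cls x = nat \<lfloor>log 16 (real (h x))\<rfloor>" for x
  define K where "K = nat \<lfloor>log 16 (real (card V))\<rfloor>"
  have clsb: "16 ^ cls x \<le> h x \<and> h x < 16 ^ (cls x + 1)" if "x \<in> Good" for x
  proof -
    have hpos: "h x > 0" using that fh[of x] by (auto simp: Good_def)
    have "log 16 (real (h x)) \<ge> 0" using hpos by simp
    then have "\<lfloor>log 16 (real (h x))\<rfloor> = int (cls x)" unfolding cls_def by simp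
    then show ?thesis using floor_log_nat_eq_powr_iff[of 16 "h x" "cls x"] hpos by simp
  qed
  have clsK: "cls x \<le> K" if "x \<in> Good" for x
  proof -
    have hpos: "h x > 0" using that fh[of x] by (auto simp: Good_def)
    have "log 16 (real (h x)) \<le> log 16 (real (card V))" using hpos hV[of x] by simp
    then show ?thesis unfolding cls_def K_def by (intro nat_mono floor_mono)
  qed
  define g where "g k = (\<Sum>x\<in>{x\<in>Good. cls x = k}. f x)" for k
  have finG: "finite Good" using finP GP finite_subset by blast
  have Sg: "S = (\<Sum>k\<in>{..K}. g k)" unfolding S_def g_def
    by (rule sum.group[symmetric]) (use finG clsK in auto)
  obtain k where k: "k \<le> K" "\<And>j. j \<le> K \<Longrightarrow> g j \<le> g k" using ex_max_nat[of K g] by auto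
  have SK: "S \<le> (K+1) * g k"
  proof -
    have "S \<le> of_nat (card {..K}) * g k" unfolding Sg by (rule sum_bounded_above) (use k in auto)
    then show ?thesis by simp
  qed
  define X where "X = {x\<in>Good. cls x = k}"
  define R' where "R' = {p\<in>F. fst p \<in> X}"
  define Y where "Y = snd ` R'"
  define E' where "E' = (\<lambda>p. {fst p, snd p}) ` R'"
  have XG: "X \<subseteq> Good" unfolding X_def by auto
  have R'P: "x \<in> X \<and> x \<in> P \<and> y \<in> V \<and> y \<notin> P \<and> {x,y} \<in> E \<and> (x,y) \<in> F \<and> (x,y) \<in> R"
    if "(x,y) \<in> R'" for x y
    using that RP[of x y] FR unfolding R'_def by auto
  have finR': "finite R'" using finF unfolding R'_def by auto
  have finX: "finite X" using finG XG finite_subset by blast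
  have rowR': "rowc R' x = f x" if "x \<in> X" for x
  proof -
    have "{y. (x,y)\<in>R'} = {y. (x,y)\<in>F}" using that unfolding R'_def by auto
    then show ?thesis unfolding rowc_def f_def by simp
  qed
  have cR': "card R' = g k"
  proof -
    have "card R' = (\<Sum>x\<in>X. rowc R' x)" by (rule card_rel_sum) (use finX finR' R'P in auto)
    also have "\<dots> = (\<Sum>x\<in>X. f x)" using rowR' by simp
    finally show ?thesis unfolding g_def X_def by simp
  qed
  have inj: "inj_on (\<lambda>p. {fst p, snd p}) R'"
  proof (rule inj_onI)
    fix p q assume p: "p \<in> R'" and q: "q \<in> R'" and eq: "{fst p, snd p} = {fst q, snd q}"
    obtain a b c d where pq: "p = (a,b)" "q = (c,d)" by fastforce
    have "a \<in> P" "b \<notin> P" "c \<in> P" "d \<notin> P" using R'P p q pq by auto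
    then show "p = q" using eq pq by (auto simp: doubleton_eq_iff)
  qed
  have cE': "card E' = g k" unfolding E'_def using card_image[OF inj] cR' by simp
  have gk: "g k \<ge> 1" using SK Spos by (metis One_nat_def less_one mult_0_right not_less)
  have E'ne: "E' \<noteq> {}" using cE' gk by auto
  have bip: "bipartite_subgraph V E X Y E'"
    unfolding bipartite_subgraph_def
  proof (intro conjI ballI)
    show "X \<subseteq> V" using XG GP PV by auto
    show "Y \<subseteq> V" unfolding Y_def using R'P by auto
    show "X \<inter> Y = {}" unfolding Y_def using R'P XG GP by fastforce
    show "E' \<subseteq> E" unfolding E'_def using R'P by auto
    fix e assume "e \<in> E'"
    then obtain x y where "(x,y) \<in> R'" "e = {x,y}" unfolding E'_def by auto
    then show "\<exists>x\<in>X. \<exists>y\<in>Y. e = {x, y}" unfolding Y_def using R'P by force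
  qed
  have degX: "degree E' v = rowc R' v" if "v \<in> X" for v
  proof -
    have vP: "v \<in> P" using that XG GP by auto
    have "{e\<in>E'. v\<in>e} = (\<lambda>y. {v,y}) ` {y. (v,y)\<in>R'}"
    proof
      show "{e\<in>E'. v\<in>e} \<subseteq> (\<lambda>y. {v,y}) ` {y. (v,y)\<in>R'}"
      proof
        fix e assume "e \<in> {e\<in>E'. v\<in>e}"
        then obtain a b where ab: "(a,b) \<in> R'" "e = {a,b}" "v \<in> e" unfolding E'_def by auto
        then have "v = a" using R'P[of a b] vP by auto
        then show "e \<in> (\<lambda>y. {v,y}) ` {y. (v,y)\<in>R'}" using ab by auto
      qed
      show "(\<lambda>y. {v,y}) ` {y. (v,y)\<in>R'} \<subseteq> {e\<in>E'. v\<in>e}" unfolding E'_def by force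
    qed
    moreover have "inj_on (\<lambda>y. {v,y}) {y. (v,y)\<in>R'}"
      by (rule inj_onI) (auto simp: doubleton_eq_iff)
    ultimately show ?thesis unfolding degree_def rowc_def by (simp add: card_image)
  qed
  have degY: "degree E' v = colc R' v" if "v \<in> Y" for v
  proof -
    have vP: "v \<notin> P" using that R'P unfolding Y_def by auto
    have "{e\<in>E'. v\<in>e} = (\<lambda>x. {x,v}) ` {x. (x,v)\<in>R'}"
    proof
      show "{e\<in>E'. v\<in>e} \<subseteq> (\<lambda>x. {x,v}) ` {x. (x,v)\<in>R'}"
      proof
        fix e assume "e \<in> {e\<in>E'. v\<in>e}"
        then obtain a b where ab: "(a,b) \<in> R'" "e = {a,b}" "v \<in> e" unfolding E'_def by auto
        then have "v = b" using R'P[of a b] vP by auto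
        then show "e \<in> (\<lambda>x. {x,v}) ` {x. (x,v)\<in>R'}" using ab by auto
      qed
      show "(\<lambda>x. {x,v}) ` {x. (x,v)\<in>R'} \<subseteq> {e\<in>E'. v\<in>e}" unfolding E'_def by force
    qed
    moreover have "inj_on (\<lambda>x. {x,v}) {x. (x,v)\<in>R'}"
      by (rule inj_onI) (auto simp: doubleton_eq_iff)
    ultimately show ?thesis unfolding degree_def colc_def by (simp add: card_image)
  qed
  have hk: "h x < 16 ^ (k+1)" if "x \<in> X" for x
    using clsb[of x] that XG unfolding X_def by auto
  have maxd: "max_degree (X \<union> Y) E' \<le> 16 ^ (k+1)"
    unfolding max_degree_def
  proof (rule Max.boundedI)
    have "Y \<noteq> {}" using E'ne unfolding Y_def E'_def by auto
    then show "degree E' ` (X \<union> Y) \<noteq> {}" by auto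
    show "finite (degree E' ` (X \<union> Y))" using finX finR' unfolding Y_def by auto
    fix a assume "a \<in> degree E' ` (X \<union> Y)"
    then obtain v where v: "v \<in> X \<union> Y" "a = degree E' v" by auto
    show "a \<le> 16 ^ (k+1)"
    proof (cases "v \<in> X")
      case True
      then show ?thesis using v degX rowR' fh[of v] hk[of v] by simp
    next
      case False
      then have vY: "v \<in> Y" using v by auto
      then obtain x0 where x0: "(x0,v) \<in> R'" unfolding Y_def by force
      have "colc R' v \<le> colc R v" unfolding colc_def
        by (rule card_mono) (use finR fin_col R'P in auto)
      also have "colc R v \<le> h x0" using R'P[OF x0] unfolding F_def FF_def h_def by auto
      also have "h x0 < 16^(k+1)" using hk R'P[OF x0] by auto
      finally show ?thesis using v degY[OF vY] by simp
    qed
  qed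
  have N1: "card X * 16 ^ k \<le> 5 * g k"
  proof -
    have "of_nat (card X) * 16 ^ k \<le> (\<Sum>x\<in>X. 5 * f x)"
    proof (rule sum_bounded_below)
      fix x assume "x \<in> X"
      then show "16 ^ k \<le> 5 * f x" using clsb[of x] XG unfolding X_def Good_def by auto
    qed
    then show ?thesis unfolding g_def X_def by (simp add: sum_distrib_left)
  qed
  have N2: "card X * max_degree (X \<union> Y) E' \<le> 80 * card E'"
  proof -
    have "card X * max_degree (X \<union> Y) E' \<le> card X * 16 ^ (k+1)" using maxd by simp
    also have "\<dots> = 16 * (card X * 16 ^ k)" by simp
    also have "\<dots> \<le> 80 * g k" using N1 by simp
    finally show ?thesis using cE' by simp
  qed
  have C1: "real (card E') \<ge> real (card X) * real (max_degree (X \<union> Y) E') / 80"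
  proof -
    have "real (card X * max_degree (X \<union> Y) E') \<le> real (80 * card E')" using N2 by linarith
    then show ?thesis by simp
  qed
  define n where "n = real (card V)"
  define L where "L = log 2 n"
  have npos: "n \<ge> 4" unfolding n_def using n4 by simp
  have L2: "L \<ge> 2"
  proof -
    have "log 2 4 \<le> log 2 n" using npos by simp
    moreover have "log 2 (4::real) = 2"
    proof -
      have "log 2 (4::real) = log 2 (2^2)" by simp
      also have "\<dots> = 2" by (subst log_pow_cancel) auto
      finally show ?thesis .
    qed
    ultimately show ?thesis unfolding L_def by simp
  qed
  have KL: "real K \<le> L / 4"
  proof -
    have "log 16 n \<ge> 0" using npos by simp
    then have "real K \<le> log 16 n" unfolding K_def n_def by linarith
    also have "log 16 n = L / 4" unfolding L_def
      using log_base_pow[of 2 4 n] by simp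
    finally show ?thesis .
  qed
  have Yn: "real (card Y) \<le> n"
  proof -
    have "Y \<subseteq> V" unfolding Y_def using R'P by auto
    then show ?thesis unfolding n_def using card_mono[OF finV] by simp
  qed
  have cEg: "real (card E) \<le> 5 * L * real (g k)"
  proof -
    have "3 * real (card E) \<le> 20 * (real K + 1) * real (g k)"
    proof -
      have "3 * card E \<le> 20 * ((K+1) * g k)" using S3 SK by linarith
      then have "real (3 * card E) \<le> real (20 * ((K+1) * g k))" by linarith
      then show ?thesis by (simp add: algebra_simps)
    qed
    also have "20 * (real K + 1) \<le> 15 * L" using KL L2 by simp
    then have "20 * (real K + 1) * real (g k) \<le> 15 * L * real (g k)"
      by (intro mult_right_mono) auto
    finally show ?thesis by simp
  qed
  have C2: "real (card E') \<ge> real (card Y) * (2 * real (card E) / n) / (10 * L)"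
  proof -
    have Lpos: "L > 0" using L2 by simp
    have "real (card Y) * (2 * real (card E) / n) / (10 * L) = (real (card Y) / n) * (real (card E) / (5 * L))"
      by (simp add: field_simps)
    also have "\<dots> \<le> 1 * (real (card E) / (5 * L))"
      using Yn npos Lpos by (intro mult_right_mono) auto
    also have "\<dots> \<le> real (g k)" using cEg Lpos by (simp add: divide_le_eq mult.commute)
    finally show ?thesis using cE' by simp
  qed
  show ?thesis
    using bip E'ne C1 C2 unfolding n_def L_def by blast
qed


theorem lemma4p2:
  shows "\<exists>d0::real. \<forall>d\<ge>d0. \<forall>(V::nat set) (E::nat set set).
    simple_graph V E \<and> V \<noteq> {} \<and> average_degree V E = d \<longrightarrow>
    (\<exists>X Y E'. bipartite_subgraph V E X Y E' \<and> E' \<noteq> {} \<and>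
       real (card E') \<ge> real (card X) * real (max_degree (X \<union> Y) E') / 80 \<and>
       real (card E') \<ge> real (card Y) * d / (10 * log 2 (real (card V))))"
proof (rule exI[of _ 8], intro allI impI)
  fix d :: real and V :: "nat set" and E :: "nat set set"
  assume d8: "8 \<le> d" and H: "simple_graph V E \<and> V \<noteq> {} \<and> average_degree V E = d"
  have sg: "simple_graph V E" using H by blast
  have finV: "finite V" using sg simple_graph_def by auto
  have npos: "card V > 0" using H finV by (simp add: card_gt_0_iff)
  have dE: "d = 2 * real (card E) / real (card V)" using H unfolding average_degree_def by auto
  have "2 * card E \<le> card V ^ 2" using adj_card[OF sg] adj_le[OF sg] by simp
  then have "2 * real (card E) \<le> real (card V) ^ 2"
    by (metis of_nat_le_iff of_nat_mult of_nat_numeral of_nat_power)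
  then have "d \<le> real (card V)" using npos unfolding dE
    by (simp add: divide_le_eq power2_eq_square)
  then have n4: "4 \<le> card V" using d8 by simp
  have "card E > 0"
  proof (rule ccontr)
    assume "\<not> card E > 0"
    then have "d = 0" unfolding dE by simp
    then show False using d8 by simp
  qed
  then have Ene: "E \<noteq> {}" by auto
  obtain A where A: "A \<subseteq> V" "card (adj V E) \<le> 4 * card (cr V E A)" using cut[OF sg] by blast
  define R where "R = cr V E A"
  define R2 where "R2 = (\<lambda>(x::nat,y::nat). (y,x)) ` R"
  have finR: "finite R"
  proof -
    have "R \<subseteq> V \<times> V" using A unfolding R_def cr_def by auto
    then show ?thesis using finV finite_subset by blast
  qed
  have hR: "card E \<le> 2 * card R" using A adj_card[OF sg] unfolding R_def by simp
  have spl: "card R \<le> card (FF R) + card (FF R2)" unfolding R2_def by (rule FF_split[OF finR])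
  have RP: "x \<in> A \<and> y \<in> V \<and> y \<notin> A \<and> {x,y} \<in> E" if "(x,y) \<in> R" for x y
    using that unfolding R_def cr_def by auto
  have "\<exists>X Y E'. bipartite_subgraph V E X Y E' \<and> E' \<noteq> {} \<and>
       real (card E') \<ge> real (card X) * real (max_degree (X \<union> Y) E') / 80 \<and>
       real (card E') \<ge> real (card Y) * (2 * real (card E) / real (card V)) / (10 * log 2 (real (card V)))"
  proof (cases "card R \<le> 2 * card (FF R)")
    case True
    show ?thesis by (rule main[OF sg n4 RP A(1) True hR Ene])
  next
    case False
    have cR2: "card R2 = card R" unfolding R2_def by (rule card_image) (auto simp: inj_on_def)
    have F2: "card R2 \<le> 2 * card (FF R2)" using False spl cR2 by linarith
    have RP2: "x \<in> V - A \<and> y \<in> V \<and> y \<notin> V - A \<and> {x,y} \<in> E" if "(x,y) \<in> R2" for x y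
    proof -
      have "(y,x) \<in> R" using that unfolding R2_def by auto
      then show ?thesis using RP[of y x] A(1) by (auto simp: insert_commute)
    qed
    show ?thesis by (rule main[OF sg n4 RP2 _ F2 _ Ene]) (use hR cR2 in auto)
  qed
  then show "\<exists>X Y E'. bipartite_subgraph V E X Y E' \<and> E' \<noteq> {} \<and>
       real (card E') \<ge> real (card X) * real (max_degree (X \<union> Y) E') / 80 \<and>
       real (card E') \<ge> real (card Y) * d / (10 * log 2 (real (card V)))"
    unfolding dE .
qed

end
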